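(* Let $n\in\mathbb N$, $\rho>0$, $\delta\in\mathbb R$, and $\mu_{\rho,\delta}(u)=\langle u\rangle^\delta e^{-\rho|u|^2}$ for $u\in\mathbb R^n$. If $\alpha>-n$ and $\beta\in\mathbb R$, then \[ I_{\alpha,\beta}(u)=\int_{\mathbb R^n}|w|^\alpha\langle w\rangle^\beta\mu_{\rho,\delta}(w+u)\,dw\sim\langle u\rangle^{\alpha+\beta}, \] i.e. there exist constants $C_1,C_2>0$ (independent of $u$) with $C_1\langle u\rangle^{\alpha+\beta}\le I_{\alpha,\beta}(u)\le C_2\langle u\rangle^{\alpha+\beta}$ for all $u\in\mathbb R^n$.
   Context: $\langle u\rangle=(1+|u|^2)^{1/2}$. *)

theory Defs
  imports "HOL-Analysis.Analysis"
begin

definition jbr :: "'a::real_normed_vector \<Rightarrow> real" where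
  "jbr u = sqrt (1 + (norm u)\<^sup>2)"

definition mu_weight :: "real \<Rightarrow> real \<Rightarrow> 'a::real_normed_vector \<Rightarrow> real" where
  "mu_weight \<rho> \<delta> u = jbr u powr \<delta> * exp (- \<rho> * (norm u)\<^sup>2)"

definition I_ab :: "real \<Rightarrow> real \<Rightarrow> real \<Rightarrow> real \<Rightarrow> real ^ 'n \<Rightarrow> real" where
  "I_ab \<rho> \<delta> \<alpha> \<beta> u =
     (\<integral>w. norm w powr \<alpha> * jbr w powr \<beta> * mu_weight \<rho> \<delta> (w + u) \<partial>lborel)"

end

theory Submission
  imports Defs
begin

lemma powr_cmp:
  fixes x a g :: real
  assumes "a > 0" "a / 4 \<le> x" "x \<le> 4 * a"
  shows "4 powr (-\<bar>g\<bar>) * a powr g \<le> x powr g \<and> x powr g \<le> 4 powr \<bar>g\<bar> * a powr g"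
proof -
  have x: "x > 0" using assms by simp
  have e: "x powr g = a powr g * (x/a) powr g" using assms x by (simp add: powr_divide)
  have t1: "1/4 \<le> x/a" "x/a \<le> 4" using assms by (auto simp: field_simps)
  have "4 powr (-\<bar>g\<bar>) \<le> (x/a) powr g \<and> (x/a) powr g \<le> 4 powr \<bar>g\<bar>"
  proof (cases "g \<ge> 0")
    case True
    have "(x/a) powr g \<le> 4 powr g" using t1 x assms True by (intro powr_mono2) auto
    moreover have "(1/4) powr g \<le> (x/a) powr g" using t1 True by (intro powr_mono2) auto
    ultimately show ?thesis using True by (simp add: powr_minus_divide powr_divide)
  next
    case False
    have "(x/a) powr g \<ge> 4 powr g" using t1 x assms False by (intro powr_mono2') auto
    moreover have "(1/4) powr g \<ge> (x/a) powr g" using t1 False x assms by (intro powr_mono2') auto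
    ultimately show ?thesis using False by (simp add: powr_minus_divide powr_divide)
  qed
  thus ?thesis using e assms by (auto simp: mult_left_mono mult.commute)
qed

lemma shell_exists_in:
  fixes x :: real assumes "0 < x" "x \<le> 1"
  shows "\<exists>k::nat. (1/2)^k / 2 < x \<and> x \<le> (1/2)^k"
proof -
  obtain m :: nat where m: "(1/2)^m < x" using real_arch_pow_inv[of x "1/2"] assms by auto
  have "\<And>x::real. (1/2)^m < x \<Longrightarrow> x \<le> 1 \<Longrightarrow> \<exists>k::nat. (1/2)^k / 2 < x \<and> x \<le> (1/2)^k"
  proof (induction m)
    case 0 then show ?case by simp
  next
    case (Suc m)
    show ?case
    proof (cases "(1/2)^m < x")
      case True then show ?thesis using Suc by blast
    next
      case False then show ?thesis using Suc.prems by (intro exI[of _ m]) auto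
    qed
  qed
  thus ?thesis using m assms by blast
qed

lemma shell_exists_out:
  fixes x :: real assumes "1 < x"
  shows "\<exists>k::nat. (2^Suc k) / 2 < x \<and> x \<le> 2^Suc k"
proof -
  obtain m :: nat where m: "x \<le> 2^m" using real_arch_pow[of 2 x] by (auto intro: less_imp_le)
  have "\<And>x::real. x \<le> 2^m \<Longrightarrow> 1 < x \<Longrightarrow> \<exists>k::nat. (2^Suc k) / 2 < x \<and> x \<le> 2^Suc k"
  proof (induction m)
    case 0 then show ?case by simp
  next
    case (Suc m)
    show ?case
    proof (cases "x \<le> 2^m")
      case True then show ?thesis using Suc by blast
    next
      case False
      then show ?thesis using Suc.prems False by (intro exI[of _ m]) auto
    qed
  qed
  thus ?thesis using m assms by blast
qed

lemma shell_bound: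
  fixes g a :: real
  assumes a: "a > 0"
  shows "(\<integral>\<^sup>+w. indicator {w::real^'n. a/2 < norm w \<and> norm w \<le> a} w * ennreal (norm w powr g) \<partial>lborel)
     \<le> ennreal (2 powr \<bar>g\<bar> * unit_ball_vol (CARD('n)) * a powr (g + CARD('n)))"
proof -
  have pt: "indicator {w::real^'n. a/2 < norm w \<and> norm w \<le> a} w * ennreal (norm w powr g)
     \<le> ennreal (2 powr \<bar>g\<bar> * a powr g) * indicator (cball 0 a) w" for w
  proof (cases "a/2 < norm w \<and> norm w \<le> a")
    case True
    have "norm w powr g \<le> 2 powr \<bar>g\<bar> * a powr g"
    proof (cases "g \<ge> 0")
      case c: True
      have "norm w powr g \<le> a powr g" using True c by (intro powr_mono2) auto
      also have "\<dots> \<le> 2 powr \<bar>g\<bar> * a powr g"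
      proof -
        have "1 \<le> 2 powr \<bar>g\<bar>" by (simp add: ge_one_powr_ge_zero)
        from mult_right_mono[OF this, of "a powr g"] show ?thesis by simp
      qed
      finally show ?thesis .
    next
      case c: False
      have "norm w powr g \<le> (a/2) powr g" using True c a by (intro powr_mono2') auto
      also have "\<dots> = 2 powr \<bar>g\<bar> * a powr g" using c a by (simp add: powr_divide powr_minus_divide divide_simps)
      finally show ?thesis .
    qed
    then show ?thesis using True by (auto simp: indicator_def)
  qed (auto simp: indicator_def)
  have "(\<integral>\<^sup>+w. indicator {w::real^'n. a/2 < norm w \<and> norm w \<le> a} w * ennreal (norm w powr g) \<partial>lborel)
      \<le> (\<integral>\<^sup>+w. ennreal (2 powr \<bar>g\<bar> * a powr g) * indicator (cball (0::real^'n) a) w \<partial>lborel)"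
    by (intro nn_integral_mono pt)
  also have "\<dots> = ennreal (2 powr \<bar>g\<bar> * a powr g) * emeasure lborel (cball (0::real^'n) a)"
    by (simp add: nn_integral_cmult_indicator)
  also have "\<dots> = ennreal (2 powr \<bar>g\<bar> * unit_ball_vol (CARD('n)) * a powr (g + CARD('n)))"
    using a by (simp add: emeasure_cball ennreal_mult'[symmetric] powr_add powr_realpow mult_ac)
  finally show ?thesis .
qed


lemma pow_powr: "(x::real) > 0 \<Longrightarrow> (x^k) powr s = (x powr s)^k"
  by (simp add: powr_realpow[symmetric] powr_powr mult.commute)

lemma half_powr_lt1: "s > 0 \<Longrightarrow> (1/2::real) powr s < 1"
proof -
  assume s: "s > 0"
  have "2 powr 0 < (2::real) powr s" using s by (intro powr_less_mono) auto
  then show ?thesis by (simp add: powr_divide)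
qed

lemma two_powr_lt1: "s < 0 \<Longrightarrow> (2::real) powr s < 1"
proof -
  assume s: "s < 0"
  have "2 powr s < (2::real) powr 0" using s by (intro powr_less_mono) auto
  then show ?thesis by simp
qed

lemma shells_fin:
  fixes a :: "nat \<Rightarrow> real" and S :: "(real^'n) set" and g :: real
  assumes apos: "\<And>k. a k > 0"
  and cover: "\<And>w. w \<in> S \<Longrightarrow> w \<noteq> 0 \<Longrightarrow> \<exists>k. a k / 2 < norm w \<and> norm w \<le> a k"
  and summ: "summable (\<lambda>k. a k powr (g + CARD('n)))"
  and Sm: "S \<in> sets lborel"
  shows "(\<integral>\<^sup>+w. indicator S w * ennreal (norm w powr g) \<partial>lborel) < \<infinity>"
proof -
  define A where "A k = {w::real^'n. a k/2 < norm w \<and> norm w \<le> a k}" for k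
  define C where "C = 2 powr \<bar>g\<bar> * unit_ball_vol (CARD('n))"
  have Ameas[measurable]: "A k \<in> sets borel" for k unfolding A_def by measurable
  have pt: "indicator S w * ennreal (norm w powr g) \<le> (\<Sum>k. indicator (A k) w * ennreal (norm w powr g))" for w
  proof (cases "w \<in> S \<and> w \<noteq> 0")
    case True
    then obtain k where k: "a k / 2 < norm w \<and> norm w \<le> a k" using cover by blast
    have "indicator S w * ennreal (norm w powr g) = indicator (A k) w * ennreal (norm w powr g)"
      using True k by (simp add: A_def indicator_def)
    also have "\<dots> \<le> (\<Sum>k. indicator (A k) w * ennreal (norm w powr g))"
    proof -
      define F where "F = (\<lambda>k. indicator (A k) w * ennreal (norm w powr g))"
      have "sum F {k} \<le> suminf F" by (rule sum_le_suminf[OF summableI]) auto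
      then have "F k \<le> suminf F" by simp
      then show ?thesis unfolding F_def .
    qed
    finally show ?thesis .
  next
    case False then show ?thesis by (auto simp: indicator_def)
  qed
  have "(\<integral>\<^sup>+w. indicator S w * ennreal (norm w powr g) \<partial>lborel)
     \<le> (\<integral>\<^sup>+w. (\<Sum>k. indicator (A k) w * ennreal (norm w powr g)) \<partial>lborel)"
    by (intro nn_integral_mono pt)
  also have "\<dots> = (\<Sum>k. \<integral>\<^sup>+w. indicator (A k) w * ennreal (norm w powr g) \<partial>lborel)"
    by (intro nn_integral_suminf) measurable
  also have "\<dots> \<le> (\<Sum>k. ennreal (C * a k powr (g + CARD('n))))"
  proof (intro suminf_le[OF _ summableI summableI])
    fix k show "(\<integral>\<^sup>+w. indicator (A k) w * ennreal (norm w powr g) \<partial>lborel) \<le> ennreal (C * a k powr (g + CARD('n)))"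
      unfolding A_def C_def using shell_bound[OF apos[of k], of g] by simp
  qed
  also have "\<dots> = ennreal (\<Sum>k. C * a k powr (g + CARD('n)))"
    using summ by (intro suminf_ennreal2 summable_mult) (auto simp: C_def)
  also have "\<dots> < \<infinity>" by simp
  finally show ?thesis .
qed

lemma inner_fin:
  fixes g :: real
  assumes "g > - real CARD('n)"
  shows "(\<integral>\<^sup>+w. indicator (cball (0::real^'n) 1) w * ennreal (norm w powr g) \<partial>lborel) < \<infinity>"
proof (rule shells_fin[where a = "\<lambda>k. (1/2)^k"])
  fix w :: "real^'n" assume "w \<in> cball 0 1" "w \<noteq> 0"
  then show "\<exists>k. (1/2::real)^k / 2 < norm w \<and> norm w \<le> (1/2)^k"
    by (intro shell_exists_in) auto
next
  have "(\<lambda>k. ((1/2::real)^k) powr (g + CARD('n))) = (\<lambda>k. ((1/2) powr (g + CARD('n)))^k)"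
    by (simp add: pow_powr)
  moreover have "summable (\<lambda>k. ((1/2::real) powr (g + CARD('n)))^k)"
    using assms half_powr_lt1[of "g + CARD('n)"] by (intro summable_geometric) auto
  ultimately show "summable (\<lambda>k. ((1/2::real)^k) powr (g + CARD('n)))" by simp
qed auto

lemma outer_fin:
  fixes g :: real
  assumes "g < - real CARD('n)"
  shows "(\<integral>\<^sup>+w. indicator {w::real^'n. 1 < norm w} w * ennreal (norm w powr g) \<partial>lborel) < \<infinity>"
proof (rule shells_fin[where a = "\<lambda>k. 2^Suc k"])
  fix w :: "real^'n" assume "w \<in> {w. 1 < norm w}"
  then show "\<exists>k. (2::real)^Suc k / 2 < norm w \<and> norm w \<le> 2^Suc k"
    by (intro shell_exists_out) auto
next
  have "(\<lambda>k. ((2::real)^Suc k) powr (g + CARD('n))) = (\<lambda>k. (2 powr (g + CARD('n))) * (2 powr (g + CARD('n)))^k)"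
    by (intro ext, subst pow_powr) auto
  moreover have "summable (\<lambda>k. (2 powr (g + CARD('n))) * ((2::real) powr (g + CARD('n)))^k)"
    using assms two_powr_lt1[of "g + CARD('n)"] by (intro summable_mult summable_geometric) auto
  ultimately show "summable (\<lambda>k. ((2::real)^Suc k) powr (g + CARD('n)))" by simp
qed auto


lemma m2[measurable]: "(\<lambda>x::real^'n. norm x powr a) \<in> borel_measurable lborel" by measurable
lemma m3[measurable]: "cball (0::real^'n) r \<in> sets lborel" by measurable
lemma m3'[measurable]: "{x::real^'n. r < norm x} \<in> sets lborel" by measurable
lemma exp_poly_bound:
  fixes c m :: real
  assumes c: "c > 0"
  shows "\<exists>K>0. \<forall>t\<ge>1. t powr m * exp (-c*t) \<le> K"
proof -
  define N where "N = Suc (nat \<lceil>m\<rceil>)"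
  have N: "m \<le> real N" "N > 0" unfolding N_def by linarith+
  define K where "K = (real N / c)^N"
  have Kpos: "K > 0" using c N by (simp add: K_def)
  have "t powr m * exp (-c*t) \<le> K" if t: "t \<ge> 1" for t
  proof -
    have "t powr m \<le> t powr (real N)" using t N by (intro powr_mono) auto
    also have "\<dots> = t^N" using t by (simp add: powr_realpow)
    also have "\<dots> = (real N / c)^N * (c*t/real N)^N"
    proof -
      have eq: "(real N / c) * (c*t/real N) = t" using c N by simp
      show ?thesis by (metis eq power_mult_distrib)
    qed
    also have "\<dots> \<le> (real N / c)^N * exp (c*t/real N)^N"
    proof -
      have "c*t/real N \<le> exp (c*t/real N)" using exp_ge_add_one_self[of "c*t/real N"] by linarith
      moreover have "0 \<le> c*t/real N" using c t by simp
      ultimately show ?thesis using c by (intro mult_left_mono power_mono) auto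
    qed
    also have "exp (c*t/real N)^N = exp (c*t)"
      using exp_of_nat_mult[of N "c*t/real N"] N by simp
    finally have "t powr m \<le> K * exp (c*t)" unfolding K_def .
    then show ?thesis by (simp add: exp_minus field_simps)
  qed
  then show ?thesis using Kpos by blast
qed

lemma jbr_ge1: "jbr u \<ge> 1" unfolding jbr_def by simp
lemma jbr_ge_norm: "jbr u \<ge> norm u"
  unfolding jbr_def by (rule real_le_rsqrt) simp
lemma jbr_le: "jbr u \<le> 1 + norm u"
  unfolding jbr_def by (rule real_sqrt_le_iff'[THEN iffD2]) (auto simp: power2_eq_square algebra_simps)
lemma jbr_pos: "jbr u > 0" using jbr_ge1[of u] by simp
lemma jbr_powr: "jbr u powr s = (1 + norm u ^ 2) powr (s/2)"
  unfolding jbr_def by (simp add: powr_half_sqrt[symmetric] powr_powr add_pos_nonneg)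

lemma P_int:
  fixes \<alpha> c k :: real
  assumes a: "\<alpha> > - real CARD('n)" and c: "c > 0"
  shows "integrable lborel (\<lambda>w::real^'n. (norm w powr \<alpha> + 1) * (1 + norm w ^ 2) powr k * exp (-c * norm w ^ 2))"
proof -
  define n where "n = real CARD('n)"
  define D where "D w = indicator (cball 0 1) w * (norm w powr \<alpha> + 1) + indicator {w. 1 < norm w} w * norm w powr (-(n+1))" for w :: "real^'n"
  have i1: "integrable lborel (\<lambda>w::real^'n. indicator (cball 0 1) w * norm w powr \<alpha>)"
  proof (rule integrableI_bounded)
    have "(\<integral>\<^sup>+w. ennreal (norm (indicator (cball 0 1) w * norm w powr \<alpha>)) \<partial>(lborel :: (real^'n) measure))
        = (\<integral>\<^sup>+w. indicator (cball (0::real^'n) 1) w * ennreal (norm w powr \<alpha>) \<partial>lborel)"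
      by (intro nn_integral_cong) (auto simp: indicator_def)
    also have "\<dots> < \<infinity>" using inner_fin[OF a] .
    finally show "(\<integral>\<^sup>+w. ennreal (norm (indicator (cball 0 1) w * norm w powr \<alpha>)) \<partial>(lborel :: (real^'n) measure)) < \<infinity>" .
  qed measurable
  have i2: "integrable lborel (\<lambda>w::real^'n. indicator {w. 1 < norm w} w * norm w powr (-(n+1)))"
  proof (rule integrableI_bounded)
    have "(\<integral>\<^sup>+w. ennreal (norm (indicator {w. 1 < norm w} w * norm w powr (-(n+1)))) \<partial>(lborel :: (real^'n) measure))
        = (\<integral>\<^sup>+w. indicator {w::real^'n. 1 < norm w} w * ennreal (norm w powr (-(n+1))) \<partial>lborel)"
      by (intro nn_integral_cong) (auto simp: indicator_def)
    also have "\<dots> < \<infinity>" by (rule outer_fin) (simp add: n_def)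
    finally show "(\<integral>\<^sup>+w. ennreal (norm (indicator {w. 1 < norm w} w * norm w powr (-(n+1)))) \<partial>(lborel :: (real^'n) measure)) < \<infinity>" .
  qed measurable
  have i3: "integrable lborel (\<lambda>w::real^'n. indicator (cball 0 1) w :: real)"
    by (intro integrable_real_indicator) (auto simp: emeasure_cball)
  have Dint: "integrable lborel D"
    unfolding D_def using Bochner_Integration.integrable_add[OF Bochner_Integration.integrable_add[OF i1 i3] i2]
    by (simp add: algebra_simps)
  obtain K where K: "K > 0" "\<And>t. t \<ge> 1 \<Longrightarrow> t powr ((n+1)/2 + \<bar>\<alpha>\<bar>/2 + k) * exp (-c*t) \<le> K"
    using exp_poly_bound[OF c] by blast
  define C where "C = max (2 powr \<bar>k\<bar>) (2 * K * exp c)"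
  have pt: "norm ((norm w powr \<alpha> + 1) * (1 + norm w ^ 2) powr k * exp (-c * norm w ^ 2)) \<le> norm (C * D w)" for w :: "real^'n"
  proof (cases "norm w \<le> 1")
    case True
    have "(1 + norm w ^ 2) powr k \<le> 2 powr \<bar>k\<bar>"
    proof -
      have "(1 + norm w ^ 2) powr k \<le> (1 + norm w ^ 2) powr \<bar>k\<bar>" by (intro powr_mono) auto
      also have "\<dots> \<le> 2 powr \<bar>k\<bar>" using True by (intro powr_mono2) (auto simp: power_le_one)
      finally show ?thesis .
    qed
    moreover have "exp (-c * norm w ^ 2) \<le> 1" using c by simp
    ultimately have "(norm w powr \<alpha> + 1) * (1 + norm w ^ 2) powr k * exp (-c * norm w ^ 2)
        \<le> (norm w powr \<alpha> + 1) * 2 powr \<bar>k\<bar> * 1"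
      by (intro mult_mono) auto
    also have "\<dots> \<le> C * D w"
    proof -
      have "0 \<le> norm w powr \<alpha> + 1" by (simp add: add_nonneg_nonneg)
      moreover have "2 powr \<bar>k\<bar> \<le> C" by (simp add: C_def)
      ultimately have "(norm w powr \<alpha> + 1) * 2 powr \<bar>k\<bar> \<le> (norm w powr \<alpha> + 1) * C" by (metis mult_left_mono)
      then show ?thesis using True by (simp add: D_def mult.commute)
    qed
    finally show ?thesis using True by (simp add: D_def C_def)
  next
    case False
    define r where "r = norm w"
    have r: "r > 1" using False by (simp add: r_def)
    have sq: "(r^2) powr (s/2) = r powr s" for s
    proof -
      have "(r powr 2) powr (s/2) = r powr s" by (subst powr_powr) simp
      moreover have "r powr 2 = r^2" using r by (simp add: powr_numeral)
      ultimately show ?thesis by simp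
    qed
    have ra: "r powr \<alpha> \<le> (1 + r^2) powr (\<bar>\<alpha>\<bar>/2)"
    proof (cases "\<alpha> \<ge> 0")
      case True
      have "r powr \<alpha> = (r^2) powr (\<alpha>/2)" using sq by simp
      also have "\<dots> \<le> (1 + r^2) powr (\<alpha>/2)" using True by (intro powr_mono2) auto
      finally show ?thesis using True by simp
    next
      case False
      have "r powr \<alpha> \<le> 1" using False r powr_mono[of \<alpha> 0 r] by simp
      also have "1 \<le> (1 + r^2) powr (\<bar>\<alpha>\<bar>/2)" by (simp add: ge_one_powr_ge_zero)
      finally show ?thesis .
    qed
    have rn: "r powr (n+1) \<le> (1 + r^2) powr ((n+1)/2)"
    proof -
      have "r powr (n+1) = (r^2) powr ((n+1)/2)" using sq by simp
      also have "\<dots> \<le> (1 + r^2) powr ((n+1)/2)" by (intro powr_mono2) (auto simp: n_def)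
      finally show ?thesis .
    qed
    have one: "1 \<le> (1 + r^2) powr (\<bar>\<alpha>\<bar>/2)" by (simp add: ge_one_powr_ge_zero)
    have "r powr (n+1) * ((r powr \<alpha> + 1) * (1 + r ^ 2) powr k * exp (-c * r ^ 2))
        \<le> (1 + r^2) powr ((n+1)/2) * ((2 * (1 + r^2) powr (\<bar>\<alpha>\<bar>/2)) * (1 + r ^ 2) powr k * exp (-c * r ^ 2))"
      using ra one rn by (intro mult_mono) auto
    also have "\<dots> = 2 * exp c * ((1 + r^2) powr ((n+1)/2 + \<bar>\<alpha>\<bar>/2 + k) * exp (-c * (1 + r^2)))"
    proof -
      have e: "exp (-c * r ^ 2) = exp c * exp (-c * (1 + r^2))" by (simp add: exp_add[symmetric] algebra_simps)
      have p: "(1 + r^2) powr ((n+1)/2 + \<bar>\<alpha>\<bar>/2 + k) = (1 + r^2) powr ((n+1)/2) * (1 + r^2) powr (\<bar>\<alpha>\<bar>/2) * (1 + r^2) powr k"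
        by (simp add: powr_add)
      show ?thesis unfolding e p by (simp only: mult_ac)
    qed
    also have "\<dots> \<le> 2 * exp c * K" using K(2)[of "1 + r^2"] by (intro mult_left_mono) auto
    finally have "r powr (n+1) * ((r powr \<alpha> + 1) * (1 + r ^ 2) powr k * exp (-c * r ^ 2)) \<le> 2 * K * exp c"
      by (simp add: mult_ac)
    then have "(r powr \<alpha> + 1) * (1 + r ^ 2) powr k * exp (-c * r ^ 2) \<le> 2 * K * exp c * r powr (-(n+1))"
    proof -
      assume h: "r powr (n+1) * ((r powr \<alpha> + 1) * (1 + r ^ 2) powr k * exp (-c * r ^ 2)) \<le> 2 * K * exp c"
      have e1: "r powr (-(n+1)) * r powr (n+1) = 1" using r by (simp add: powr_add[symmetric])
      have "(r powr \<alpha> + 1) * (1 + r ^ 2) powr k * exp (-c * r ^ 2)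
          = r powr (-(n+1)) * (r powr (n+1) * ((r powr \<alpha> + 1) * (1 + r ^ 2) powr k * exp (-c * r ^ 2)))"
        by (simp only: mult.assoc[symmetric] e1 mult_1)
      also have "\<dots> \<le> r powr (-(n+1)) * (2 * K * exp c)" using h by (intro mult_left_mono) auto
      finally show ?thesis by (simp only: mult_ac)
    qed
    also have "\<dots> \<le> C * r powr (-(n+1))" by (intro mult_right_mono) (auto simp: C_def)
    finally show ?thesis using r K by (simp add: D_def r_def indicator_def)
  qed
  show ?thesis
  proof (rule Bochner_Integration.integrable_bound[OF integrable_mult_right[OF Dint, of C]])
    show "(\<lambda>w::real^'n. (norm w powr \<alpha> + 1) * (1 + norm w ^ 2) powr k * exp (-c * norm w ^ 2)) \<in> borel_measurable lborel"
      by measurable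
    show "AE w in lborel. norm ((norm (w::real^'n) powr \<alpha> + 1) * (1 + norm w ^ 2) powr k * exp (-c * norm w ^ 2)) \<le> norm (C * D w)"
      using pt by (intro AE_I2)
  qed
qed


lemma sq_E1:
  fixes x y z :: real
  assumes "0 \<le> x" "0 \<le> y" "0 \<le> z" "z \<le> x + y"
  shows "z^2 \<le> 2*x^2 + 2*y^2"
proof -
  have "z^2 \<le> (x+y)^2" using assms by (intro power_mono) auto
  also have "\<dots> \<le> 2*x^2 + 2*y^2"
  proof -
    have "(x+y)^2 = 2*x^2+2*y^2 - (x-y)^2" by (simp add: power2_eq_square algebra_simps)
    moreover have "0 \<le> (x-y)^2" by simp
    ultimately show ?thesis by linarith
  qed
  finally show ?thesis .
qed

lemma sq_E2:
  fixes x y z :: real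
  assumes "0 \<le> x" "0 \<le> y" "0 \<le> z" "z \<le> x + y" "y/2 \<le> x"
  shows "y^2/8 + z^2/20 \<le> x^2"
proof -
  have "z^2 \<le> 2*x^2 + 2*y^2" using sq_E1 assms by blast
  moreover have "y^2 \<le> 4*x^2"
  proof -
    have "y^2 \<le> (2*x)^2" using assms by (intro power_mono) auto
    then show ?thesis by (simp add: power_mult_distrib)
  qed
  ultimately show ?thesis by linarith
qed

lemma onep[simp]: "1 + norm (w::'a::real_normed_vector)^2 \<noteq> 0"
proof -
  have "0 < 1 + norm w ^ 2" by (intro add_pos_nonneg) auto
  then show ?thesis by simp
qed

lemma mu_nonneg: "mu_weight \<rho> \<delta> v \<ge> 0"
  unfolding mu_weight_def by simp

lemma mu_gauss:
  fixes \<rho> \<delta> :: real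
  assumes "\<rho> > 0"
  shows "\<exists>Kg>0. \<forall>v::'a::real_normed_vector. mu_weight \<rho> \<delta> v \<le> Kg * exp (-(\<rho>/2) * norm v ^ 2)"
proof -
  obtain K where K: "K > 0" "\<And>t. t \<ge> 1 \<Longrightarrow> t powr (\<delta>/2) * exp (-(\<rho>/2)*t) \<le> K"
    using exp_poly_bound[of "\<rho>/2" "\<delta>/2"] assms by auto
  have "mu_weight \<rho> \<delta> v \<le> (K * exp (\<rho>/2)) * exp (-(\<rho>/2) * norm v ^ 2)" for v :: 'a
  proof -
    have "mu_weight \<rho> \<delta> v = ((1 + norm v^2) powr (\<delta>/2) * exp (-(\<rho>/2)*(1 + norm v^2))) * (exp (\<rho>/2) * exp (-(\<rho>/2) * norm v ^ 2))"
      unfolding mu_weight_def jbr_powr by (simp add: exp_add[symmetric] algebra_simps)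
    also have "\<dots> \<le> K * (exp (\<rho>/2) * exp (-(\<rho>/2) * norm v ^ 2))"
      using K(2)[of "1 + norm v^2"] by (intro mult_right_mono) auto
    finally show ?thesis by (simp add: mult_ac)
  qed
  moreover have "K * exp (\<rho>/2) > 0" using K by simp
  ultimately show ?thesis by blast
qed

lemma gauss_int:
  fixes c :: real assumes c: "c > 0"
  shows "integrable lborel (\<lambda>w::real^'n. exp (-c * norm w ^ 2))"
proof -
  have "integrable lborel (\<lambda>w::real^'n. (norm w powr 0 + 1) * (1 + norm w ^ 2) powr 0 * exp (-c * norm w ^ 2))"
    using c by (intro P_int) auto
  then show ?thesis
  proof (rule Bochner_Integration.integrable_bound)
    show "(\<lambda>w::real^'n. exp (-c * norm w ^ 2)) \<in> borel_measurable lborel" by measurable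
    show "AE w in lborel. norm (exp (-c * norm (w::real^'n) ^ 2)) \<le> norm ((norm w powr 0 + 1) * (1 + norm w ^ 2) powr 0 * exp (-c * norm w ^ 2))"
      by (intro AE_I2) (auto simp: add_pos_nonneg)
  qed
qed

lemma f_int:
  fixes \<alpha> \<beta> c :: real
  assumes a: "\<alpha> > - real CARD('n)" and c: "c > 0"
  shows "integrable lborel (\<lambda>w::real^'n. norm w powr \<alpha> * jbr w powr \<beta> * exp (-c * norm w ^ 2))"
proof -
  have "integrable lborel (\<lambda>w::real^'n. (norm w powr \<alpha> + 1) * (1 + norm w ^ 2) powr (\<beta>/2) * exp (-c * norm w ^ 2))"
    using a c by (intro P_int) auto
  then show ?thesis
  proof (rule Bochner_Integration.integrable_bound)
    show "(\<lambda>w::real^'n. norm w powr \<alpha> * jbr w powr \<beta> * exp (-c * norm w ^ 2)) \<in> borel_measurable lborel"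
      unfolding jbr_def by measurable
    show "AE w in lborel. norm (norm (w::real^'n) powr \<alpha> * jbr w powr \<beta> * exp (-c * norm w ^ 2)) \<le> norm ((norm w powr \<alpha> + 1) * (1 + norm w ^ 2) powr (\<beta>/2) * exp (-c * norm w ^ 2))"
    proof (intro AE_I2)
      fix w :: "real^'n"
      have "norm w powr \<alpha> * jbr w powr \<beta> * exp (-c * norm w ^ 2) \<le> (norm w powr \<alpha> + 1) * (1 + norm w ^ 2) powr (\<beta>/2) * exp (-c * norm w ^ 2)"
        unfolding jbr_powr by (intro mult_right_mono) auto
      moreover have "0 \<le> norm w powr \<alpha> * jbr w powr \<beta> * exp (-c * norm w ^ 2)" by simp
      ultimately show "norm (norm w powr \<alpha> * jbr w powr \<beta> * exp (-c * norm w ^ 2)) \<le> norm ((norm w powr \<alpha> + 1) * (1 + norm w ^ 2) powr (\<beta>/2) * exp (-c * norm w ^ 2))"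
        by simp
    qed
  qed
qed

theorem lemma2p5:
  fixes \<rho> \<delta> \<alpha> \<beta> :: real
  assumes "\<rho> > 0" and "\<alpha> > - real CARD('n::finite)"
  shows "\<exists>C1 C2. C1 > 0 \<and> C2 > 0 \<and>
    (\<forall>u :: real ^ 'n. C1 * jbr u powr (\<alpha> + \<beta>) \<le> I_ab \<rho> \<delta> \<alpha> \<beta> u
                     \<and> I_ab \<rho> \<delta> \<alpha> \<beta> u \<le> C2 * jbr u powr (\<alpha> + \<beta>))"
proof -
  have rho: "\<rho> > 0" using assms(1) .
  have q2: "\<rho>/2 > 0" and q4: "\<rho>/4 > 0" and q40: "\<rho>/40 > 0" using rho by auto
  define f where "f = (\<lambda>w::real^'n. norm w powr \<alpha> * jbr w powr \<beta>)"
  define F where "F = (\<lambda>(u::real^'n) (w::real^'n). f w * mu_weight \<rho> \<delta> (w + u))"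
  have I_eq: "I_ab \<rho> \<delta> \<alpha> \<beta> u = integral\<^sup>L lborel (F u)" for u
    by (simp add: I_ab_def F_def f_def)
  have f_nn: "0 \<le> f w" for w by (simp add: f_def)
  obtain Kg where Kg: "Kg > 0" "\<And>v::real^'n. mu_weight \<rho> \<delta> v \<le> Kg * exp (-(\<rho>/2) * norm v ^ 2)"
    using mu_gauss[OF rho, of \<delta>] by auto
  have fexp_int: "integrable lborel (\<lambda>w. f w * exp (-c * norm w ^ 2))" if "c > 0" for c
    unfolding f_def using f_int[OF assms(2) that] by blast
  have Fmeas: "F u \<in> borel_measurable lborel" for u
    unfolding F_def f_def jbr_def mu_weight_def by measurable
  have Fnn: "0 \<le> F u w" for u w by (simp add: F_def f_nn mu_nonneg)
  have mu_le: "mu_weight \<rho> \<delta> (w + u) \<le> (Kg * exp ((\<rho>/2) * norm u ^ 2)) * exp (-(\<rho>/4) * norm w ^ 2)" for u w :: "real^'n"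
  proof -
    have tri: "norm w \<le> norm (w + u) + norm u" using norm_triangle_sub[of w "w + u"] by simp
    have "norm w ^ 2 \<le> 2 * norm (w + u) ^ 2 + 2 * norm u ^ 2" by (rule sq_E1) (use tri in auto)
    then have "(\<rho>/4) * norm w ^ 2 \<le> (\<rho>/4) * (2 * norm (w + u) ^ 2 + 2 * norm u ^ 2)"
      using rho by (intro mult_left_mono) auto
    also have "\<dots> = (\<rho>/2) * norm (w + u) ^ 2 + (\<rho>/2) * norm u ^ 2" by (simp add: algebra_simps)
    finally have "-(\<rho>/2) * norm (w + u) ^ 2 \<le> (\<rho>/2) * norm u ^ 2 + (-(\<rho>/4) * norm w ^ 2)" by simp
    then have "exp (-(\<rho>/2) * norm (w + u) ^ 2) \<le> exp ((\<rho>/2) * norm u ^ 2) * exp (-(\<rho>/4) * norm w ^ 2)"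
      by (simp add: exp_add[symmetric])
    then have "Kg * exp (-(\<rho>/2) * norm (w + u) ^ 2) \<le> Kg * (exp ((\<rho>/2) * norm u ^ 2) * exp (-(\<rho>/4) * norm w ^ 2))"
      using Kg(1) by (intro mult_left_mono) auto
    then show ?thesis using Kg(2)[of "w + u"] by (simp add: mult_ac)
  qed
  have Fbound0: "F u w \<le> (Kg * exp ((\<rho>/2) * norm u ^ 2)) * (f w * exp (-(\<rho>/4) * norm w ^ 2))" for u w
  proof -
    have "F u w \<le> f w * ((Kg * exp ((\<rho>/2) * norm u ^ 2)) * exp (-(\<rho>/4) * norm w ^ 2))"
      unfolding F_def using mu_le[of w u] f_nn[of w] by (intro mult_left_mono) auto
    then show ?thesis by (simp add: mult_ac)
  qed
  have Fint: "integrable lborel (F u)" for u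
  proof (rule Bochner_Integration.integrable_bound[OF integrable_mult_right[OF fexp_int[OF q4], of "Kg * exp ((\<rho>/2) * norm u ^ 2)"]])
    show "F u \<in> borel_measurable lborel" by (rule Fmeas)
    show "AE w in lborel. norm (F u w) \<le> norm (Kg * exp (\<rho> / 2 * (norm u)\<^sup>2) * (f w * exp (- (\<rho> / 4) * (norm w)\<^sup>2)))"
    proof (intro AE_I2)
      fix w
      have "0 \<le> F u w" by (rule Fnn)
      moreover note Fbound0[of u w]
      ultimately show "norm (F u w) \<le> norm (Kg * exp (\<rho> / 2 * (norm u)\<^sup>2) * (f w * exp (- (\<rho> / 4) * (norm w)\<^sup>2)))"
        by simp
    qed
  qed
  have mu_meas: "(mu_weight \<rho> \<delta> :: real^'n \<Rightarrow> real) \<in> borel_measurable borel"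
    unfolding jbr_def mu_weight_def by measurable
  have mu_int: "integrable lborel (mu_weight \<rho> \<delta> :: real^'n \<Rightarrow> real)"
  proof (rule Bochner_Integration.integrable_bound[OF integrable_mult_right[OF gauss_int[OF q2], of Kg]])
    show "(mu_weight \<rho> \<delta> :: real^'n \<Rightarrow> real) \<in> borel_measurable lborel" using mu_meas by simp
    show "AE v in lborel. norm (mu_weight \<rho> \<delta> (v::real^'n)) \<le> norm (Kg * exp (- (\<rho> / 2) * (norm v)\<^sup>2))"
    proof (intro AE_I2)
      fix v :: "real^'n"
      have "0 \<le> mu_weight \<rho> \<delta> v" by (rule mu_nonneg)
      then show "norm (mu_weight \<rho> \<delta> v) \<le> norm (Kg * exp (- (\<rho> / 2) * (norm v)\<^sup>2))"
        using Kg(1) Kg(2)[of v] by simp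
    qed
  qed
  define M where "M = integral\<^sup>L lborel (mu_weight \<rho> \<delta> :: real^'n \<Rightarrow> real)"
  have shift_int: "integrable lborel (\<lambda>w::real^'n. mu_weight \<rho> \<delta> (w + u))"
   and shift: "integral\<^sup>L lborel (\<lambda>w::real^'n. mu_weight \<rho> \<delta> (w + u)) = M" for u :: "real^'n"
  proof -
    have d: "distr lborel borel ((+) u) = lborel" by (rule lborel_distr_plus)
    have "integrable (distr lborel borel ((+) u)) (mu_weight \<rho> \<delta>) \<longleftrightarrow> integrable lborel (\<lambda>x. mu_weight \<rho> \<delta> (u + x))"
      by (rule integrable_distr_eq) (use mu_meas in auto)
    then show "integrable lborel (\<lambda>w::real^'n. mu_weight \<rho> \<delta> (w + u))" using mu_int d by (simp add: add.commute)
    have "integral\<^sup>L (distr lborel borel ((+) u)) (mu_weight \<rho> \<delta>) = integral\<^sup>L lborel (\<lambda>x. mu_weight \<rho> \<delta> (u + x))"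
      by (rule integral_distr) (use mu_meas in auto)
    then show "integral\<^sup>L lborel (\<lambda>w::real^'n. mu_weight \<rho> \<delta> (w + u)) = M" using d by (simp add: M_def add.commute)
  qed
  have M_nn: "M \<ge> 0" unfolding M_def by (rule Bochner_Integration.integral_nonneg) (simp add: mu_nonneg)

  define V where "V = unit_ball_vol (real CARD('n)) * (1/4::real)^CARD('n)"
  define C0 where "C0 = 4 powr (-\<bar>\<alpha>\<bar>) * 4 powr (-\<bar>\<beta>\<bar>) * (4 powr (-\<bar>\<delta>\<bar>) * exp (-\<rho>))"
  have V_pos: "V > 0" by (simp add: V_def)
  have C0_pos: "C0 > 0" by (simp add: C0_def)
  have lower: "C0 * V * jbr u powr (\<alpha>+\<beta>) \<le> I_ab \<rho> \<delta> \<alpha> \<beta> u" for u :: "real^'n"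
  proof -
    obtain e :: "real^'n" where e: "norm e = 1" using vector_choose_size[of 1] by auto
    define e' where "e' = (if u = 0 then e else (1 / norm u) *\<^sub>R u)"
    have e'1: "norm e' = 1" using e by (simp add: e'_def)
    have ue: "norm u *\<^sub>R e' = u" by (simp add: e'_def)
    define p where "p = (-(norm u + 3/4)) *\<^sub>R e'"
    have pu: "p + u = (-(3/4::real)) *\<^sub>R e'"
    proof -
      have "p + u = (-(norm u + 3/4)) *\<^sub>R e' + norm u *\<^sub>R e'" by (simp add: p_def ue)
      also have "\<dots> = (-(3/4::real)) *\<^sub>R e'" by (simp add: scaleR_left_distrib[symmetric])
      finally show ?thesis .
    qed
    have np: "norm p = norm u + 3/4"
    proof -
      have nn: "0 \<le> norm u + (3/4::real)" by (intro add_nonneg_nonneg) auto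
      have "norm p = \<bar>-(norm u + 3/4)\<bar> * norm e'" unfolding p_def by (rule norm_scaleR)
      also have "\<dots> = norm u + 3/4" by (simp only: e'1 mult_1_right abs_minus_cancel abs_of_nonneg[OF nn])
      finally show ?thesis .
    qed
    have inb: "norm (w + u) \<le> 1 \<and> norm u + 1/2 \<le> norm w \<and> norm w \<le> norm u + 1" if "w \<in> ball p (1/4)" for w
    proof -
      have d: "norm (w - p) < 1/4" using that by (simp add: dist_norm norm_minus_commute)
      have "w + u = (w - p) + (p + u)" by simp
      then have "norm (w + u) \<le> norm (w - p) + norm (p + u)" by (metis norm_triangle_ineq)
      moreover have "norm (p + u) = 3/4" using e'1 by (simp add: pu)
      moreover have "norm p \<le> norm w + norm (p - w)" by (rule norm_triangle_sub)
      moreover have "norm w \<le> norm p + norm (w - p)" by (rule norm_triangle_sub)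
      moreover have "norm (p - w) = norm (w - p)" by (rule norm_minus_commute)
      ultimately show ?thesis using d np by linarith
    qed
    have ju: "1 \<le> jbr u" "norm u \<le> jbr u" "jbr u \<le> 1 + norm u" "0 < jbr u"
      by (rule jbr_ge1 jbr_ge_norm jbr_le jbr_pos)+
    have pt: "C0 * jbr u powr (\<alpha>+\<beta>) * indicator (ball p (1/4)) w \<le> F u w" for w
    proof (cases "w \<in> ball p (1/4)")
      case True
      note h = inb[OF True]
      have w1: "jbr u / 4 \<le> norm w" "norm w \<le> 4 * jbr u" using h ju by linarith+
      have w2: "jbr u / 4 \<le> jbr w" "jbr w \<le> 4 * jbr u" using h ju jbr_ge_norm[of w] jbr_le[of w] by linarith+
      have v2: "1/4 \<le> jbr (w+u)" "jbr (w+u) \<le> 4 * 1" using h jbr_ge1[of "w+u"] jbr_le[of "w+u"] by linarith+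
      have a1: "4 powr (-\<bar>\<alpha>\<bar>) * jbr u powr \<alpha> \<le> norm w powr \<alpha>" using powr_cmp[OF ju(4) w1] by blast
      have a2: "4 powr (-\<bar>\<beta>\<bar>) * jbr u powr \<beta> \<le> jbr w powr \<beta>" using powr_cmp[OF ju(4) w2] by blast
      have a3: "4 powr (-\<bar>\<delta>\<bar>) \<le> jbr (w+u) powr \<delta>" using powr_cmp[of 1 "jbr (w+u)" \<delta>] v2 by simp
      have a4: "exp (-\<rho>) \<le> exp (-\<rho> * norm (w+u)^2)"
      proof -
        have "norm (w+u)^2 \<le> 1" using h by (simp add: power_le_one)
        then have "\<rho> * norm (w+u)^2 \<le> \<rho>" using rho mult_left_mono[of "norm (w+u)^2" 1 \<rho>] by simp
        then show ?thesis by simp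
      qed
      have "C0 * jbr u powr (\<alpha>+\<beta>) = (4 powr (-\<bar>\<alpha>\<bar>) * jbr u powr \<alpha> * (4 powr (-\<bar>\<beta>\<bar>) * jbr u powr \<beta>)) * (4 powr (-\<bar>\<delta>\<bar>) * exp (-\<rho>))"
        by (simp add: C0_def powr_add mult_ac)
      also have "\<dots> \<le> (norm w powr \<alpha> * jbr w powr \<beta>) * (jbr (w+u) powr \<delta> * exp (-\<rho> * norm (w+u)^2))"
        using a1 a2 a3 a4 by (intro mult_mono) auto
      also have "\<dots> = F u w" by (simp add: F_def f_def mu_weight_def)
      finally show ?thesis using True by simp
    next
      case False then show ?thesis using Fnn[of u w] by simp
    qed
    have int1: "integrable lborel (\<lambda>w. C0 * jbr u powr (\<alpha>+\<beta>) * indicator (ball p (1/4)) w)"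
      by (intro integrable_mult_right integrable_real_indicator) (auto simp: emeasure_ball)
    have eqI: "integral\<^sup>L lborel (\<lambda>w. C0 * jbr u powr (\<alpha>+\<beta>) * indicator (ball p (1/4)) w) = C0 * jbr u powr (\<alpha>+\<beta>) * V"
    proof -
      have "measure lborel (ball p (1/4)) = V" using content_ball[of "1/4" p] by (simp add: V_def)
      then show ?thesis by simp
    qed
    have le: "integral\<^sup>L lborel (\<lambda>w. C0 * jbr u powr (\<alpha>+\<beta>) * indicator (ball p (1/4)) w) \<le> integral\<^sup>L lborel (F u)"
      by (intro integral_mono int1 Fint pt)
    have "C0 * V * jbr u powr (\<alpha>+\<beta>) = C0 * jbr u powr (\<alpha>+\<beta>) * V" by (simp only: mult_ac)
    then show ?thesis using eqI le I_eq[of u] by linarith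
  qed

  obtain K2 where K2: "K2 > 0" "\<And>t. t \<ge> 1 \<Longrightarrow> t powr (-(\<alpha>+\<beta>)/2) * exp (-(\<rho>/16)*t) \<le> K2"
    using exp_poly_bound[of "\<rho>/16" "-(\<alpha>+\<beta>)/2"] rho by auto
  have expu: "exp (-(\<rho>/16) * norm u ^ 2) \<le> K2 * exp (\<rho>/16) * jbr u powr (\<alpha>+\<beta>)" for u :: "real^'n"
  proof -
    define t where "t = 1 + norm u ^ 2"
    have t1: "t \<ge> 1" by (simp add: t_def)
    have jb: "jbr u powr (\<alpha>+\<beta>) = t powr ((\<alpha>+\<beta>)/2)" by (simp add: jbr_powr t_def)
    have inv: "t powr ((\<alpha>+\<beta>)/2) * t powr (-(\<alpha>+\<beta>)/2) = 1"
    proof -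
      have "t powr ((\<alpha>+\<beta>)/2) * t powr (-(\<alpha>+\<beta>)/2) = t powr ((\<alpha>+\<beta>)/2 + (-(\<alpha>+\<beta>)/2))"
        by (simp add: powr_add)
      also have "(\<alpha>+\<beta>)/2 + (-(\<alpha>+\<beta>)/2) = 0" by (simp add: field_simps)
      finally show ?thesis using t1 by simp
    qed
    have ee: "exp (-(\<rho>/16) * norm u ^ 2) = exp (-(\<rho>/16) * t) * exp (\<rho>/16)"
      by (simp add: t_def exp_add[symmetric] algebra_simps)
    have "exp (-(\<rho>/16) * norm u ^ 2) = t powr ((\<alpha>+\<beta>)/2) * (t powr (-(\<alpha>+\<beta>)/2) * exp (-(\<rho>/16)*t)) * exp (\<rho>/16)"
    proof -
      have "exp (-(\<rho>/16) * norm u ^ 2) = (t powr ((\<alpha>+\<beta>)/2) * t powr (-(\<alpha>+\<beta>)/2)) * exp (-(\<rho>/16)*t) * exp (\<rho>/16)"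
        unfolding inv ee by simp
      then show ?thesis by (simp only: mult.assoc)
    qed
    also have "\<dots> \<le> t powr ((\<alpha>+\<beta>)/2) * K2 * exp (\<rho>/16)"
      using K2(2)[OF t1] by (intro mult_right_mono mult_left_mono) auto
    finally show ?thesis using jb by (simp add: mult_ac)
  qed
  define J where "J = integral\<^sup>L lborel (\<lambda>w. f w * exp (-(\<rho>/40) * norm w ^ 2))"
  define J0 where "J0 = integral\<^sup>L lborel (\<lambda>w. f w * exp (-(\<rho>/4) * norm w ^ 2))"
  have J_nn: "J \<ge> 0" unfolding J_def by (rule Bochner_Integration.integral_nonneg) (simp add: f_nn)
  have J0_nn: "J0 \<ge> 0" unfolding J0_def by (rule Bochner_Integration.integral_nonneg) (simp add: f_nn)
  define A where "A = 4 powr \<bar>\<alpha>\<bar> * 4 powr \<bar>\<beta>\<bar>"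
  define C2 where "C2 = A * M + Kg * (K2 * exp (\<rho>/16)) * J + Kg * exp (\<rho>/2) * J0 * 4 powr \<bar>\<alpha>+\<beta>\<bar>"
  have upper: "I_ab \<rho> \<delta> \<alpha> \<beta> u \<le> C2 * jbr u powr (\<alpha>+\<beta>)" for u :: "real^'n"
  proof (cases "norm u \<ge> 1")
    case big: True
    define B where "B = jbr u powr (\<alpha>+\<beta>)"
    have B_nn: "0 \<le> B" by (simp add: B_def)
    define T1 where "T1 = (\<lambda>w. A * B * mu_weight \<rho> \<delta> (w + u))"
    define T2 where "T2 = (\<lambda>w. (Kg * exp (-(\<rho>/16) * norm u ^ 2)) * (f w * exp (-(\<rho>/40) * norm w ^ 2)))"
    have ju: "1 \<le> jbr u" "norm u \<le> jbr u" "jbr u \<le> 1 + norm u" "0 < jbr u"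
      by (rule jbr_ge1 jbr_ge_norm jbr_le jbr_pos)+
    have T1nn: "0 \<le> T1 w" for w by (simp add: T1_def A_def B_def mu_nonneg)
    have T2nn: "0 \<le> T2 w" for w using Kg(1) f_nn[of w] by (simp add: T2_def)
    have pt: "F u w \<le> T1 w + T2 w" for w
    proof (cases "norm (w + u) \<le> norm u / 2")
      case True
      have tr1: "norm w \<le> norm (w + u) + norm u" using norm_triangle_sub[of w "w + u"] by simp
      have tr2: "norm u \<le> norm (w + u) + norm w" using norm_triangle_sub[of u "w + u"] by simp
      have w1: "jbr u / 4 \<le> norm w" "norm w \<le> 4 * jbr u" using True tr1 tr2 ju big by linarith+
      have w2: "jbr u / 4 \<le> jbr w" "jbr w \<le> 4 * jbr u"
        using True tr1 tr2 ju big jbr_ge_norm[of w] jbr_le[of w] by linarith+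
      have a1: "norm w powr \<alpha> \<le> 4 powr \<bar>\<alpha>\<bar> * jbr u powr \<alpha>" using powr_cmp[OF ju(4) w1] by blast
      have a2: "jbr w powr \<beta> \<le> 4 powr \<bar>\<beta>\<bar> * jbr u powr \<beta>" using powr_cmp[OF ju(4) w2] by blast
      have "f w \<le> (4 powr \<bar>\<alpha>\<bar> * jbr u powr \<alpha>) * (4 powr \<bar>\<beta>\<bar> * jbr u powr \<beta>)"
        unfolding f_def using a1 a2 by (intro mult_mono) auto
      also have "\<dots> = A * B" by (simp add: A_def B_def powr_add mult_ac)
      finally have fAB: "f w \<le> A * B" .
      have "F u w \<le> A * B * mu_weight \<rho> \<delta> (w + u)"
        unfolding F_def using fAB mu_nonneg by (intro mult_right_mono) auto
      then show ?thesis using T2nn[of w] unfolding T1_def by linarith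
    next
      case False
      have tr1: "norm w \<le> norm (w + u) + norm u" using norm_triangle_sub[of w "w + u"] by simp
      have "norm u ^ 2 / 8 + norm w ^ 2 / 20 \<le> norm (w + u) ^ 2" by (rule sq_E2) (use False tr1 in auto)
      then have "(\<rho>/2) * (norm u ^ 2 / 8 + norm w ^ 2 / 20) \<le> (\<rho>/2) * norm (w + u) ^ 2"
        using rho by (intro mult_left_mono) auto
      moreover have "(\<rho>/2) * (norm u ^ 2 / 8 + norm w ^ 2 / 20) = (\<rho>/16) * norm u ^ 2 + (\<rho>/40) * norm w ^ 2"
        by (simp add: algebra_simps)
      ultimately have "-(\<rho>/2) * norm (w + u) ^ 2 \<le> -(\<rho>/16) * norm u ^ 2 + (-(\<rho>/40) * norm w ^ 2)"
        by linarith
      then have "exp (-(\<rho>/2) * norm (w + u) ^ 2) \<le> exp (-(\<rho>/16) * norm u ^ 2) * exp (-(\<rho>/40) * norm w ^ 2)"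
        by (simp add: exp_add[symmetric])
      then have "Kg * exp (-(\<rho>/2) * norm (w + u) ^ 2) \<le> Kg * (exp (-(\<rho>/16) * norm u ^ 2) * exp (-(\<rho>/40) * norm w ^ 2))"
        using Kg(1) by (intro mult_left_mono) auto
      then have mu2: "mu_weight \<rho> \<delta> (w + u) \<le> Kg * (exp (-(\<rho>/16) * norm u ^ 2) * exp (-(\<rho>/40) * norm w ^ 2))"
        using Kg(2)[of "w + u"] by linarith
      have "F u w \<le> f w * (Kg * (exp (-(\<rho>/16) * norm u ^ 2) * exp (-(\<rho>/40) * norm w ^ 2)))"
        unfolding F_def using mu2 f_nn[of w] by (intro mult_left_mono) auto
      also have "\<dots> = T2 w" by (simp add: T2_def mult_ac)
      finally show ?thesis using T1nn[of w] by linarith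
    qed
    have iT1: "integrable lborel T1" unfolding T1_def by (rule integrable_mult_right[OF shift_int[of u]])
    have iT2: "integrable lborel T2" unfolding T2_def by (rule integrable_mult_right[OF fexp_int[OF q40]])
    have "I_ab \<rho> \<delta> \<alpha> \<beta> u = integral\<^sup>L lborel (F u)" by (rule I_eq)
    also have "\<dots> \<le> integral\<^sup>L lborel (\<lambda>w. T1 w + T2 w)"
      by (intro integral_mono Fint Bochner_Integration.integrable_add iT1 iT2 pt)
    also have "\<dots> = integral\<^sup>L lborel T1 + integral\<^sup>L lborel T2" by (rule Bochner_Integration.integral_add[OF iT1 iT2])
    also have "integral\<^sup>L lborel T1 = A * B * M" unfolding T1_def using shift[of u] by simp
    also have "integral\<^sup>L lborel T2 = Kg * exp (-(\<rho>/16) * norm u ^ 2) * J" unfolding T2_def J_def by simp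
    also have "A * B * M + Kg * exp (-(\<rho>/16) * norm u ^ 2) * J \<le> A * B * M + Kg * (K2 * exp (\<rho>/16) * B) * J"
      using expu[of u] Kg(1) J_nn by (intro add_left_mono mult_right_mono mult_left_mono) (auto simp: B_def)
    also have "\<dots> \<le> C2 * B"
    proof -
      have "0 \<le> Kg * exp (\<rho>/2) * J0 * 4 powr \<bar>\<alpha>+\<beta>\<bar> * B" using Kg(1) J0_nn B_nn by simp
      moreover have "C2 * B = A * B * M + Kg * (K2 * exp (\<rho>/16) * B) * J + Kg * exp (\<rho>/2) * J0 * 4 powr \<bar>\<alpha>+\<beta>\<bar> * B"
        by (simp add: C2_def algebra_simps)
      ultimately show ?thesis by linarith
    qed
    finally show ?thesis by (simp add: B_def)
  next
    case small: False
    define B where "B = jbr u powr (\<alpha>+\<beta>)"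
    have ju: "1 \<le> jbr u" "norm u \<le> jbr u" "jbr u \<le> 1 + norm u" "0 < jbr u"
      by (rule jbr_ge1 jbr_ge_norm jbr_le jbr_pos)+
    have pt: "F u w \<le> (Kg * exp (\<rho>/2)) * (f w * exp (-(\<rho>/4) * norm w ^ 2))" for w
    proof -
      have "norm u ^ 2 \<le> 1" using small by (simp add: power_le_one)
      then have "(\<rho>/2) * norm u ^ 2 \<le> \<rho>/2" using rho mult_left_mono[of "norm u ^ 2" 1 "\<rho>/2"] by simp
      then have "Kg * exp ((\<rho>/2) * norm u ^ 2) \<le> Kg * exp (\<rho>/2)" using Kg(1) by simp
      then have "(Kg * exp ((\<rho>/2) * norm u ^ 2)) * (f w * exp (-(\<rho>/4) * norm w ^ 2))
          \<le> (Kg * exp (\<rho>/2)) * (f w * exp (-(\<rho>/4) * norm w ^ 2))"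
        using f_nn[of w] by (intro mult_right_mono) auto
      then show ?thesis using Fbound0[of u w] by linarith
    qed
    have "I_ab \<rho> \<delta> \<alpha> \<beta> u = integral\<^sup>L lborel (F u)" by (rule I_eq)
    also have "\<dots> \<le> integral\<^sup>L lborel (\<lambda>w. (Kg * exp (\<rho>/2)) * (f w * exp (-(\<rho>/4) * norm w ^ 2)))"
      by (intro integral_mono Fint integrable_mult_right[OF fexp_int[OF q4]] pt)
    also have "\<dots> = Kg * exp (\<rho>/2) * J0" unfolding J0_def by simp
    finally have I1: "I_ab \<rho> \<delta> \<alpha> \<beta> u \<le> Kg * exp (\<rho>/2) * J0" .
    have jb: "4 powr (-\<bar>\<alpha>+\<beta>\<bar>) \<le> B"
      using powr_cmp[of 1 "jbr u" "\<alpha>+\<beta>"] ju small unfolding B_def by simp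
    define D0 where "D0 = Kg * exp (\<rho>/2) * J0 * 4 powr \<bar>\<alpha>+\<beta>\<bar>"
    have D0_nn: "0 \<le> D0" using Kg(1) J0_nn by (simp add: D0_def)
    have inv4: "4 powr \<bar>\<alpha>+\<beta>\<bar> * 4 powr (-\<bar>\<alpha>+\<beta>\<bar>) = 1" by (simp add: powr_add[symmetric])
    have "Kg * exp (\<rho>/2) * J0 = D0 * 4 powr (-\<bar>\<alpha>+\<beta>\<bar>)"
      unfolding D0_def using inv4 by (simp add: mult.assoc)
    also have "\<dots> \<le> D0 * B" using jb D0_nn by (intro mult_left_mono) auto
    also have "\<dots> \<le> C2 * B"
    proof -
      have "0 \<le> A * M + Kg * (K2 * exp (\<rho>/16)) * J" using M_nn J_nn Kg(1) K2(1)
        by (simp add: A_def)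
      then have "D0 \<le> C2" unfolding C2_def D0_def by linarith
      moreover have "0 \<le> B" by (simp add: B_def)
      ultimately show ?thesis by (rule mult_right_mono)
    qed
    finally show ?thesis using I1 by (simp add: B_def)
  qed
  have C2_nn: "C2 \<ge> 0" unfolding C2_def A_def using M_nn J_nn J0_nn Kg K2
    by (intro add_nonneg_nonneg mult_nonneg_nonneg) auto
  show ?thesis
  proof (intro exI conjI allI)
    show "C0 * V > 0" using C0_pos V_pos by simp
    show "C2 + 1 > 0" using C2_nn by simp
    fix u :: "real^'n"
    show "C0 * V * jbr u powr (\<alpha>+\<beta>) \<le> I_ab \<rho> \<delta> \<alpha> \<beta> u" by (rule lower)
    have "0 \<le> jbr u powr (\<alpha>+\<beta>)" by simp
    then show "I_ab \<rho> \<delta> \<alpha> \<beta> u \<le> (C2 + 1) * jbr u powr (\<alpha>+\<beta>)"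
      using upper[of u] unfolding distrib_right by linarith
  qed
qed

end
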